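(* Let $K\subset J^1\mathbb{R}$ be a connected oriented Legendrian knot, let $1<k\le m\le n$, let $\beta\in S_{m-1}$ be a positive permutation braid regarded as a Legendrian $n$-tangle by placing $n-m+1$ horizontal strands below it, and let $\nu\in\mathcal{R}\mathfrak{Leg}_n$. Then $$z\,\widetilde R^{(m-1)}_{(K,\beta\,\alpha_{k,m}\,\nu)}(z)=R^{\tau(m-k+1,m)}_{( *;K,\beta\nu)}(z),$$ where $\alpha_{k,m}$ is regarded as an $n$-tangle combination by adding $n-m$ horizontal strands below, and $*$ is the location in $\beta\nu$ between $\nu$ and $\beta$ (immediately to the left of $\beta$).
   Context: Conventions. $J^1\mathbb{R}=\mathbb{R}^3$ and $J^1[0,1]=[0,1]\times\mathbb{R}^2$ carry contact form $dz-y\,dx$; Legendrian curves are represented by front projections to the $(x,z)$-plane. A left (resp. right) cusp has both branches leaving to the right (resp. left). Tangles. A Legendrian $n$-tangle is a compact Legendrian $\alpha\subset J^1[0,1]$ with boundary on $\partial J^1[0,1]$ whose front coincides near $x=0,1$ with the lines $z=i$, $1\le i\le n$, up to Legendrian isotopy fixed near the boundary; strands over a generic $x$ are numbered from top to bottom. $\alpha\cdot\beta$ places $\beta$ to the left of $\alpha$. For $\beta\in S_p$ the positive permutation braid $\beta$ is the cusp-free $p$-tangle joining left endpoint $i$ to right endpoint $\beta(i)$ with exactly one crossing between strands starting at $i<j$ iff $\beta(i)>\beta(j)$. $\sigma_i$ is the braid of $(i\ i{+}1)$; $e_i$ consists of horizontal strands at heights $j\ne i,i+1$ plus a right cusp joining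 left endpoints $i,i+1$ and a left cusp joining right endpoints $i,i+1$. $\mathcal{R}=\mathbb{Z}[s^{\pm1}]$ localized at all $s^k-s^{-k}$, $z=s-s^{-1}$; $\mathcal{R}\mathfrak{Leg}_n$ is the free $\mathcal{R}$-module on isotopy classes of $n$-tangles with bilinear product. $\alpha_{2,m}=e_{m-1}$ and $\alpha_{k,m}=\sigma_{m-k+1}\alpha_{k-1,m}\sigma_{m-k+1}-z\sigma_{m-k+1}\alpha_{k-1,m}-z\alpha_{k-1,m}\sigma_{m-k+1}+z^2\alpha_{k-1,m}$ for $3\le k\le m$. Normal rulings: a set of switch crossings plus, at each generic $x$, a fixed-point-free pairing of strands, locally constant, pairing the two strands at each cusp, never pairing the two strands of a crossing immediately beside it, with partners following strands through non-switch crossings and staying with heights at switches, and with the normality condition that at each switch the two pairs involved span nested or disjoint height intervals on both sides. $j(\rho)=\#\text{switches}-\#\text{right cusps}$. Satellite $S(K,\eta)$ of an $n$-tangle $\eta$: the $n$-copy of $K$'s front (copies shifted by distinct small amounts in $z$) with the $n$ parallel strands replaced, inside a small rectangle $J$ around an arc where $K$ is oriented left-to-right, by a rescaled front of $\eta$. A normal ruling of $S(K,\eta)$ is $k$-reduced if at the right boundary of $J$ none of the top $k$ strands of $\eta$ are paired with one another; $\widetilde R^{(k)}_{(K,\eta)}=\sum_{\rho\ k\text{-reduced}}z^{j(\rho)}$. For a location $*$ inside $J$ at an $x$-value with no crossings or cusps of $\eta$, $\rho$ is $(k,m)$-paired at $*$ if $\rho$ is $(m-1)$-reduced and pairs strand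 $k$ with strand $m$ of $\eta$ at $*$ (strands numbered top to bottom at $*$); $R^{\tau(k,m)}_{( *;K,\eta)}=\sum_{\rho\ (k,m)\text{-paired at }*}z^{j(\rho)}$. These polynomials extend linearly to $\eta\in\mathcal{R}\mathfrak{Leg}_n$. *)

theory Defs
  imports "HOL-Computational_Algebra.Polynomial" "HOL-Computational_Algebra.Fraction_Field"
begin

text \<open>We work in the fraction field Q(s) = Frac(Z[s]) of int polynomials; the ring
 R = Z[s^(+-1)] localized at all s^k - s^(-k) is the subring described by in_R.\<close>

type_synonym rf = "int poly fract"

definition svar :: rf where "svar = Fract [:0, 1:] 1"

definition zz :: rf where "zz = svar - inverse svar"

definition in_R :: "rf \<Rightarrow> bool" where
  "in_R c \<longleftrightarrow> (\<exists>(a::int poly) (e::nat) (ks::nat list). (\<forall>k\<in>set ks. 0 < k) \<and>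
      c = Fract a 1 / (svar ^ e * prod_list (map (\<lambda>k. svar ^ k - inverse svar ^ k) ks)))"

section \<open>Generic fronts as words of elementary pieces (read left to right)\<close>

text \<open>Strands at a generic x are numbered 0,1,2,... from top to bottom.
 Cr i: crossing of strands i and i+1.
 LC i: a left cusp (branches leaving to the right) creating new strands at positions i, i+1.
 RC i: a right cusp (branches leaving to the left) ending the strands at positions i, i+1.\<close>

datatype piece = Cr nat | LC nat | RC nat

fun cnt_after :: "nat \<Rightarrow> piece \<Rightarrow> nat" where
  "cnt_after c (Cr i) = c"
| "cnt_after c (LC i) = c + 2"
| "cnt_after c (RC i) = c - 2"

fun piece_ok :: "nat \<Rightarrow> piece \<Rightarrow> bool" where
  "piece_ok c (Cr i) = (i + 1 < c)"
| "piece_ok c (LC i) = (i \<le> c)"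
| "piece_ok c (RC i) = (i + 1 < c)"

text \<open>number of strands at position k (i.e. just before piece k), starting with c strands\<close>
definition cntf :: "nat \<Rightarrow> piece list \<Rightarrow> nat \<Rightarrow> nat" where
  "cntf c w k = foldl cnt_after c (take k w)"

definition valid_front :: "nat \<Rightarrow> piece list \<Rightarrow> nat \<Rightarrow> bool" where
  "valid_front c w c' \<longleftrightarrow> (\<forall>k<length w. piece_ok (cntf c w k) (w ! k)) \<and> cntf c w (length w) = c'"

definition tr :: "nat \<Rightarrow> nat \<Rightarrow> nat" where
  "tr i j = (if j = i then i + 1 else if j = i + 1 then i else j)"

definition up :: "nat \<Rightarrow> nat \<Rightarrow> nat" where
  "up i j = (if j < i then j else j + 2)"

definition down :: "nat \<Rightarrow> nat \<Rightarrow> nat" where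
  "down i j = (if j < i then j else j - 2)"

text \<open>where a strand at height j just left of a piece continues just right of it\<close>
fun thr :: "piece \<Rightarrow> nat \<Rightarrow> nat option" where
  "thr (Cr i) j = Some (tr i j)"
| "thr (LC i) j = Some (up i j)"
| "thr (RC i) j = (if j = i \<or> j = i + 1 then None else Some (down i j))"

definition seg :: "piece list \<Rightarrow> nat \<times> nat \<Rightarrow> bool" where
  "seg w a \<longleftrightarrow> fst a \<le> length w \<and> snd a < cntf 0 w (fst a)"

definition fedge :: "piece list \<Rightarrow> nat \<times> nat \<Rightarrow> nat \<times> nat \<Rightarrow> bool" where
  "fedge w a b \<longleftrightarrow>
     (\<exists>k j j'. a = (k, j) \<and> b = (Suc k, j') \<and> k < length w \<and> j < cntf 0 w k \<and> thr (w ! k) j = Some j')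
   \<or> (\<exists>k i. k < length w \<and> w ! k = LC i \<and> a = (Suc k, i) \<and> b = (Suc k, i + 1))
   \<or> (\<exists>k i. k < length w \<and> w ! k = RC i \<and> a = (k, i) \<and> b = (k, i + 1))"

definition connected_front :: "piece list \<Rightarrow> bool" where
  "connected_front w \<longleftrightarrow> (\<forall>a b. seg w a \<and> seg w b \<longrightarrow> (\<lambda>x y. fedge w x y \<or> fedge w y x)\<^sup>*\<^sup>* a b)"

definition legendrian_knot_front :: "piece list \<Rightarrow> bool" where
  "legendrian_knot_front w \<longleftrightarrow> valid_front 0 w 0 \<and> connected_front w"

text \<open>ori k j = True means: at position k the strand at height j is oriented left-to-right\<close>
definition orientation_ok :: "piece list \<Rightarrow> (nat \<Rightarrow> nat \<Rightarrow> bool) \<Rightarrow> bool" where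
  "orientation_ok w ori \<longleftrightarrow> (\<forall>k<length w.
      (\<forall>j<cntf 0 w k. case thr (w ! k) j of Some j' \<Rightarrow> ori (Suc k) j' = ori k j | None \<Rightarrow> True) \<and>
      (case w ! k of LC i \<Rightarrow> ori (Suc k) i \<noteq> ori (Suc k) (i + 1)
                   | RC i \<Rightarrow> ori k i \<noteq> ori k (i + 1)
                   | Cr i \<Rightarrow> True))"

definition pairing_ok :: "nat \<Rightarrow> (nat \<Rightarrow> nat) \<Rightarrow> bool" where
  "pairing_ok c Q \<longleftrightarrow> (\<forall>j<c. Q j < c \<and> Q j \<noteq> j \<and> Q (Q j) = j) \<and> (\<forall>j. c \<le> j \<longrightarrow> Q j = j)"

definition hint :: "(nat \<Rightarrow> nat) \<Rightarrow> nat \<Rightarrow> nat set" where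
  "hint Q a = {min a (Q a) .. max a (Q a)}"

definition normal_at :: "nat \<Rightarrow> (nat \<Rightarrow> nat) \<Rightarrow> bool" where
  "normal_at i Q \<longleftrightarrow> hint Q i \<subseteq> hint Q (i + 1) \<or> hint Q (i + 1) \<subseteq> hint Q i
                     \<or> hint Q i \<inter> hint Q (i + 1) = {}"

fun is_Cr :: "piece \<Rightarrow> bool" where
  "is_Cr (Cr i) = True" | "is_Cr _ = False"

fun is_RC :: "piece \<Rightarrow> bool" where
  "is_RC (RC i) = True" | "is_RC _ = False"

text \<open>A normal ruling: a set Sw of switched crossings (indices into the word) and the
 pairings P k at each position k = 0..length w (P k = id beyond length w).\<close>
definition ruling_step :: "piece \<Rightarrow> bool \<Rightarrow> (nat \<Rightarrow> nat) \<Rightarrow> (nat \<Rightarrow> nat) \<Rightarrow> bool" where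
  "ruling_step pc sw Q Q' \<longleftrightarrow> (case pc of
      Cr i \<Rightarrow> Q i \<noteq> i + 1 \<and>
              (if sw then Q' = Q \<and> normal_at i Q else Q' = tr i \<circ> Q \<circ> tr i)
    | LC i \<Rightarrow> Q' = (\<lambda>j. if j = i then i + 1 else if j = i + 1 then i else up i (Q (down i j)))
    | RC i \<Rightarrow> Q i = i + 1 \<and> Q' = (\<lambda>j. down i (Q (up i j))))"

definition rulings :: "piece list \<Rightarrow> (nat set \<times> (nat \<Rightarrow> nat \<Rightarrow> nat)) set" where
  "rulings w = {(Sw, P).
      Sw \<subseteq> {k. k < length w \<and> is_Cr (w ! k)} \<and>
      (\<forall>k\<le>length w. pairing_ok (cntf 0 w k) (P k)) \<and>
      (\<forall>k>length w. P k = id) \<and>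
      (\<forall>k<length w. ruling_step (w ! k) (k \<in> Sw) (P k) (P (Suc k)))}"

definition jr :: "piece list \<Rightarrow> nat set \<times> (nat \<Rightarrow> nat \<Rightarrow> nat) \<Rightarrow> int" where
  "jr w \<rho> = int (card (fst \<rho>)) - int (length (filter is_RC w))"

definition ncopy_piece :: "nat \<Rightarrow> piece \<Rightarrow> piece list" where
  "ncopy_piece n pc = (case pc of
      Cr i \<Rightarrow> concat (map (\<lambda>t. map (\<lambda>r. Cr (n * i + t + r)) [0..<n]) (rev [0..<n]))
    | LC i \<Rightarrow> map (\<lambda>t. LC (n * i + 2 * t)) [0..<n] @
              concat (map (\<lambda>u. map (\<lambda>r. Cr (n * i + 2 * u - 1 - r)) [0..<u]) [1..<n])
    | RC i \<Rightarrow> rev (concat (map (\<lambda>u. map (\<lambda>r. Cr (n * i + 2 * u - 1 - r)) [0..<u]) [1..<n])) @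
              map (\<lambda>t. RC (n * i + 2 * (n - 1 - t))) [0..<n])"

definition ncopy :: "nat \<Rightarrow> piece list \<Rightarrow> piece list" where
  "ncopy n w = concat (map (ncopy_piece n) w)"

fun shiftp :: "nat \<Rightarrow> piece \<Rightarrow> piece" where
  "shiftp b (Cr i) = Cr (b + i)" | "shiftp b (LC i) = LC (b + i)" | "shiftp b (RC i) = RC (b + i)"

text \<open>Satellite S(K, eta): K given by front word wK, the rectangle J placed at position p
 around the strand at height s (which must be oriented left-to-right); eta an n-tangle word.\<close>
definition sat :: "nat \<Rightarrow> piece list \<Rightarrow> nat \<Rightarrow> nat \<Rightarrow> piece list \<Rightarrow> piece list" where
  "sat n wK p s eta = ncopy n (take p wK) @ map (shiftp (n * s)) eta @ ncopy n (drop p wK)"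

text \<open>none of the top k strands of eta (block starting at height b) are paired together at position q\<close>
definition reduced_at :: "nat \<Rightarrow> nat \<Rightarrow> nat \<Rightarrow> nat set \<times> (nat \<Rightarrow> nat \<Rightarrow> nat) \<Rightarrow> bool" where
  "reduced_at q b k \<rho> \<longleftrightarrow> (\<forall>a<k. \<forall>c<k. snd \<rho> q (b + a) \<noteq> b + c)"

definition Rtilde :: "nat \<Rightarrow> piece list \<Rightarrow> nat \<Rightarrow> nat \<Rightarrow> nat \<Rightarrow> piece list \<Rightarrow> rf" where
  "Rtilde n wK p s k eta =
     (let W = sat n wK p s eta; q = length (ncopy n (take p wK)) + length eta in
      \<Sum>\<rho>\<in>{\<rho>\<in>rulings W. reduced_at q (n * s) k \<rho>}. zz powi jr W \<rho>)"

text \<open>R^{tau(k,m)}_{(*;K,eta)} with * located after the first ell pieces of eta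
 (strands numbered 1..n from the top).\<close>
definition Rtau :: "nat \<Rightarrow> piece list \<Rightarrow> nat \<Rightarrow> nat \<Rightarrow> nat \<Rightarrow> nat \<Rightarrow> nat \<Rightarrow> piece list \<Rightarrow> rf" where
  "Rtau n wK p s k m ell eta =
     (let W = sat n wK p s eta; q = length (ncopy n (take p wK)) + length eta;
          qs = length (ncopy n (take p wK)) + ell in
      \<Sum>\<rho>\<in>{\<rho>\<in>rulings W. reduced_at q (n * s) (m - 1) \<rho> \<and>
                          snd \<rho> qs (n * s + (k - 1)) = n * s + (m - 1)}. zz powi jr W \<rho>)"

type_synonym combo = "(rf \<times> piece list) list"

text \<open>tmul A B is the product A.B, i.e. B placed to the LEFT of A (words read left to right)\<close>
definition tmul :: "combo \<Rightarrow> combo \<Rightarrow> combo" where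
  "tmul A B = concat (map (\<lambda>(a, wa). map (\<lambda>(b, wb). (a * b, wb @ wa)) B) A)"

definition cscale :: "rf \<Rightarrow> combo \<Rightarrow> combo" where
  "cscale c A = map (\<lambda>(a, w). (c * a, w)) A"

text \<open>alpha_aux j m = alpha_{j+2,m}; sigma_{m-k+1} is Cr (m-k) in 0-based indexing\<close>
primrec alpha_aux :: "nat \<Rightarrow> nat \<Rightarrow> combo" where
  "alpha_aux 0 m = [(1, [RC (m - 2), LC (m - 2)])]"
| "alpha_aux (Suc j) m =
     (let S = [(1, [Cr (m - (j + 3))])]; A = alpha_aux j m in
      tmul (tmul S A) S @ cscale (- zz) (tmul S A) @ cscale (- zz) (tmul A S) @ cscale (zz ^ 2) A)"

definition alpha :: "nat \<Rightarrow> nat \<Rightarrow> combo" where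
  "alpha k m = alpha_aux (k - 2) m"

definition Rtilde_lin :: "nat \<Rightarrow> piece list \<Rightarrow> nat \<Rightarrow> nat \<Rightarrow> nat \<Rightarrow> combo \<Rightarrow> rf" where
  "Rtilde_lin n wK p s k A = sum_list (map (\<lambda>(c, w). c * Rtilde n wK p s k w) A)"

fun braid_pairs :: "nat list \<Rightarrow> piece list \<Rightarrow> nat set list" where
  "braid_pairs l [] = []"
| "braid_pairs l (Cr i # w) = {l ! i, l ! (i + 1)} # braid_pairs (l[i := l ! (i + 1), i + 1 := l ! i]) w"
| "braid_pairs l (_ # w) = []"

text \<open>w is a word for a positive permutation braid on the top p strands: only crossings
 among the top p strands, and any two strands cross at most once.\<close>
definition pos_perm_braid :: "nat \<Rightarrow> piece list \<Rightarrow> bool" where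
  "pos_perm_braid p w \<longleftrightarrow> (\<forall>x\<in>set w. \<exists>i. x = Cr i \<and> i + 1 < p) \<and> distinct (braid_pairs [0..<p] w)"

end

theory Submission
  imports Defs
begin


definition lcQ :: "nat \<Rightarrow> (nat \<Rightarrow> nat) \<Rightarrow> nat \<Rightarrow> nat" where
  "lcQ i Q = (\<lambda>j. if j = i then i + 1 else if j = i + 1 then i else up i (Q (down i j)))"
definition rcQ :: "nat \<Rightarrow> (nat \<Rightarrow> nat) \<Rightarrow> nat \<Rightarrow> nat" where
  "rcQ i Q = (\<lambda>j. down i (Q (up i j)))"
definition tQ :: "nat \<Rightarrow> (nat \<Rightarrow> nat) \<Rightarrow> nat \<Rightarrow> nat" where
  "tQ i Q = tr i \<circ> Q \<circ> tr i"

fun stepsum :: "nat \<Rightarrow> piece \<Rightarrow> (nat \<Rightarrow> nat) \<Rightarrow> ((nat \<Rightarrow> nat) \<Rightarrow> rf) \<Rightarrow> rf" where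
  "stepsum c (Cr i) Q F = (if Q i \<noteq> i + 1 then
      (if normal_at i Q then zz * F Q else 0) + (if pairing_ok c (tQ i Q) then F (tQ i Q) else 0) else 0)"
| "stepsum c (LC i) Q F = (if pairing_ok (c + 2) (lcQ i Q) then F (lcQ i Q) else 0)"
| "stepsum c (RC i) Q F = (if Q i = i + 1 \<and> pairing_ok (c - 2) (rcQ i Q) then inverse zz * F (rcQ i Q) else 0)"

fun RSK :: "nat \<Rightarrow> piece list \<Rightarrow> (nat \<Rightarrow> nat) \<Rightarrow> ((nat \<Rightarrow> nat) \<Rightarrow> rf) \<Rightarrow> rf" where
  "RSK c [] Q H = H Q"
| "RSK c (pc # w) Q H = stepsum c pc Q (\<lambda>Q'. RSK (cnt_after c pc) w Q' H)"

fun RSg :: "nat \<Rightarrow> piece list \<Rightarrow> (nat \<Rightarrow> nat) \<Rightarrow> (nat \<Rightarrow> (nat \<Rightarrow> nat) \<Rightarrow> rf) \<Rightarrow> rf" where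
  "RSg c [] Q g = g 0 Q"
| "RSg c (pc # w) Q g = g 0 Q * stepsum c pc Q (\<lambda>Q'. RSg (cnt_after c pc) w Q' (\<lambda>k. g (Suc k)))"

lemma zz_nz: "zz \<noteq> 0"
proof
  assume "zz = 0"
  hence e: "svar = inverse svar" unfolding zz_def by simp
  have nz: "svar \<noteq> 0" unfolding svar_def by (simp add: eq_fract Zero_fract_def)
  have "svar * svar = 1" using e nz by (metis right_inverse)
  moreover have "svar * svar = Fract [:0,0,1:] 1" unfolding svar_def by simp
  ultimately have "[:0,0,1::int:] = 1" by (simp add: eq_fract One_fract_def)
  hence "coeff [:0,0,1::int:] 0 = coeff 1 0" by simp
  thus False by simp
qed

lemma stepsum_cong:
  assumes "pairing_ok c Q" "\<And>Q'. pairing_ok (cnt_after c pc) Q' \<Longrightarrow> F Q' = F' Q'"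
  shows "stepsum c pc Q F = stepsum c pc Q F'"
  using assms by (cases pc) auto

lemma stepsum_add: "stepsum c pc Q (\<lambda>Q'. F1 Q' + F2 Q') = stepsum c pc Q F1 + stepsum c pc Q F2"
  by (cases pc) (auto simp: algebra_simps)
lemma stepsum_mult: "stepsum c pc Q (\<lambda>Q'. a * F Q') = a * stepsum c pc Q F"
  by (cases pc) (auto simp: algebra_simps)
lemma stepsum_zero: "stepsum c pc Q (\<lambda>Q'. 0) = 0"
  by (cases pc) auto

lemma RSK_append: "RSK c (u @ v) Q H = RSK c u Q (\<lambda>Q'. RSK (foldl cnt_after c u) v Q' H)"
  by (induction u arbitrary: c Q) auto

lemma RSK_cong:
  assumes "pairing_ok c Q" "\<And>Q'. pairing_ok (foldl cnt_after c w) Q' \<Longrightarrow> H Q' = H' Q'"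
  shows "RSK c w Q H = RSK c w Q H'"
  using assms
proof (induction w arbitrary: c Q)
  case Nil then show ?case by simp
next
  case (Cons pc w)
  show ?case
    apply simp
    apply (rule stepsum_cong[OF Cons.prems(1)])
    apply (rule Cons.IH)
    using Cons.prems(2) by auto
qed

lemma RSK_add: "RSK c w Q (\<lambda>Q'. F1 Q' + F2 Q') = RSK c w Q F1 + RSK c w Q F2"
  by (induction w arbitrary: c Q) (auto simp: stepsum_add)
lemma RSK_mult: "RSK c w Q (\<lambda>Q'. a * F Q') = a * RSK c w Q F"
  by (induction w arbitrary: c Q) (auto simp: stepsum_mult)
lemma RSK_zero: "RSK c w Q (\<lambda>Q'. 0) = 0"
  by (induction w arbitrary: c Q) (auto simp: stepsum_zero)
lemma RSK_sum_list: "RSK c w Q (\<lambda>Q'. sum_list (map (\<lambda>x. f x Q') xs)) = sum_list (map (\<lambda>x. RSK c w Q (f x)) xs)"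
  by (induction xs) (auto simp: RSK_add RSK_zero)



definition topp :: "nat \<Rightarrow> nat \<Rightarrow> (nat \<Rightarrow> nat) \<Rightarrow> bool" where
  "topp b m Q \<longleftrightarrow> (\<exists>x<m-1. \<exists>y<m-1. Q (b + x) = b + y)"

lemma pok_invol: "pairing_ok c Q \<Longrightarrow> Q (Q j) = j"
  unfolding pairing_ok_def by (cases "j < c") auto

lemma tr_tr[simp]: "tr i (tr i j) = j"
  unfolding tr_def by auto

lemma tQ_tQ[simp]: "tQ i (tQ i Q) = Q"
  unfolding tQ_def by (auto simp: fun_eq_iff)

lemma tQ_app: "tQ i Q j = tr i (Q (tr i j))"
  unfolding tQ_def by simp

lemma pok_tQ: "pairing_ok c Q \<Longrightarrow> i + 1 < c \<Longrightarrow> pairing_ok c (tQ i Q)"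
proof -
  assume p: "pairing_ok c Q" and i: "i + 1 < c"
  have inv: "\<And>j. Q (Q j) = j" using pok_invol[OF p] .
  show ?thesis using p i unfolding pairing_ok_def tQ_app tr_def
    by (auto split: if_splits) (metis inv)+
qed

lemma topp_tQ: "b \<le> i \<Longrightarrow> i + 3 \<le> b + m \<Longrightarrow> topp b m Q \<Longrightarrow> topp b m (tQ i Q)"
proof -
  assume a: "b \<le> i" "i + 3 \<le> b + m" "topp b m Q"
  then obtain x y where xy: "x < m - 1" "y < m - 1" "Q (b + x) = b + y" unfolding topp_def by blast
  define x' where "x' = tr i (b + x) - b"
  define y' where "y' = tr i (b + y) - b"
  have x1: "tr i (b + x) = b + x'" "x' < m - 1" using a xy unfolding x'_def tr_def by auto
  have y1: "tr i (b + y) = b + y'" "y' < m - 1" using a xy unfolding y'_def tr_def by auto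
  have "tQ i Q (b + x') = b + y'"
    unfolding tQ_app using x1 y1 xy by (metis tr_tr)
  thus ?thesis using x1 y1 unfolding topp_def by blast
qed

lemma rc_lc:
  assumes p: "pairing_ok N Q" and q: "Q i = i + 1"
  shows "pairing_ok (N - 2) (rcQ i Q)" "lcQ i (rcQ i Q) = Q"
proof -
  have inv: "\<And>j. Q (Q j) = j" using pok_invol[OF p] .
  have q2: "Q (i+1) = i" using inv q by metis
  have iN: "i + 1 < N" using p q unfolding pairing_ok_def
    by (metis add_lessD1 linorder_not_less n_not_Suc_n q2 Suc_eq_plus1)
  have ne: "\<And>j. j \<noteq> i \<Longrightarrow> j \<noteq> i + 1 \<Longrightarrow> Q j \<noteq> i \<and> Q j \<noteq> i + 1"
    using inv q q2 by metis
  show "pairing_ok (N - 2) (rcQ i Q)"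
    unfolding pairing_ok_def rcQ_def
  proof (intro conjI allI impI)
    fix j assume j: "j < N - 2"
    have u: "up i j \<noteq> i" "up i j \<noteq> i + 1" "up i j < N" using j iN unfolding up_def by auto
    have v: "Q (up i j) \<noteq> i" "Q (up i j) \<noteq> i + 1" "Q (up i j) < N" "Q (up i j) \<noteq> up i j"
      using ne[OF u(1,2)] p u(3) unfolding pairing_ok_def by auto
    show "down i (Q (up i j)) < N - 2" using v iN unfolding down_def by auto
    show "down i (Q (up i j)) \<noteq> j" using v u unfolding down_def up_def by (auto split: if_splits)
    have w: "up i (down i (Q (up i j))) = Q (up i j)" using v unfolding up_def down_def by auto
    show "down i (Q (up i (down i (Q (up i j))))) = j" unfolding w inv unfolding up_def down_def by auto
  next
    fix j assume j: "N - 2 \<le> j"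
    have "up i j = j + 2" using j iN unfolding up_def by auto
    moreover have "Q (j + 2) = j + 2" using p j iN unfolding pairing_ok_def by auto
    ultimately show "down i (Q (up i j)) = j" using iN j unfolding down_def by auto
  qed
  show "lcQ i (rcQ i Q) = Q"
  proof
    fix j
    show "lcQ i (rcQ i Q) j = Q j"
    proof (cases "j = i \<or> j = i + 1")
      case True then show ?thesis using q q2 unfolding lcQ_def by auto
    next
      case False
      hence "up i (down i j) = j" unfolding up_def down_def by auto
      moreover have "up i (down i (Q j)) = Q j" using ne[of j] False unfolding up_def down_def by auto
      ultimately show ?thesis using False unfolding lcQ_def rcQ_def by auto
    qed
  qed
qed



definition LS :: "nat \<Rightarrow> nat \<Rightarrow> combo \<Rightarrow> (nat \<Rightarrow> nat) \<Rightarrow> ((nat \<Rightarrow> nat) \<Rightarrow> rf) \<Rightarrow> rf" where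
  "LS N b A Q H = sum_list (map (\<lambda>(a, w). a * RSK N (map (shiftp b) w) Q H) A)"

definition cntpres :: "piece list \<Rightarrow> bool" where
  "cntpres w \<longleftrightarrow> (\<forall>c\<ge>2. foldl cnt_after c w = c)"

lemma cnt_shift[simp]: "cnt_after c (shiftp b pc) = cnt_after c pc"
  by (cases pc) auto

lemma fold_shift[simp]: "foldl cnt_after c (map (shiftp b) w) = foldl cnt_after c w"
  by (induction w arbitrary: c) auto

lemma tmul_S_left: "tmul [(1, [x])] A = map (\<lambda>(a, w). (a, w @ [x])) A"
  unfolding tmul_def by (simp add: split_def)

lemma tmul_S_right: "tmul A [(1, [x])] = map (\<lambda>(a, w). (a, x # w)) A"
  unfolding tmul_def by (induction A) (auto simp: split_def)

lemma alpha_cnt: "\<forall>x\<in>set (alpha_aux j m). cntpres (snd x)"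
proof (induction j)
  case 0 then show ?case unfolding cntpres_def by auto
next
  case (Suc j)
  have cr: "\<And>w i. cntpres w \<Longrightarrow> cntpres (w @ [Cr i]) \<and> cntpres (Cr i # w)"
    unfolding cntpres_def by auto
  show ?case using Suc
    by (auto simp: Let_def tmul_S_left tmul_S_right cscale_def cr split: prod.splits)
qed

lemma LS_append: "LS N b (xs @ ys) Q H = LS N b xs Q H + LS N b ys Q H"
  unfolding LS_def by simp

lemma LS_cscale: "LS N b (cscale c A) Q H = c * LS N b A Q H"
  unfolding LS_def cscale_def
  by (induction A) (auto simp: split_def algebra_simps)

lemma LS_right:
  assumes "\<forall>x\<in>set A. cntpres (snd x)" "2 \<le> N"
  shows "LS N b (tmul [(1, [Cr i])] A) Q H = LS N b A Q (\<lambda>Q'. RSK N [Cr (b + i)] Q' H)"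
  unfolding LS_def tmul_S_left using assms
  by (induction A) (auto simp: split_def RSK_append cntpres_def)

lemma LS_left:
  shows "LS N b (tmul A [(1, [Cr i])]) Q H = RSK N [Cr (b + i)] Q (\<lambda>Q'. LS N b A Q' H)"
  unfolding LS_def tmul_S_right
  by (induction A) (auto simp: split_def RSK_add RSK_mult RSK_zero)

lemma X_eq:
  assumes "pairing_ok N Q" "i + 1 < N"
  shows "RSK N [Cr i] Q F = (if Q i \<noteq> i + 1 then (if normal_at i Q then zz * F Q else 0) + F (tQ i Q) else 0)"
  using assms pok_tQ by simp

lemma nonnormal_topp:
  assumes "Q ci \<noteq> ci + 1" "Q (ci + 1) = e" "ci + 1 < e" "\<not> normal_at ci Q" "b \<le> ci" "e = b + m - 1"
  shows "topp b m Q"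
proof -
  define a where "a = Q ci"
  have h1: "hint Q ci = {min ci a .. max ci a}" unfolding hint_def a_def by simp
  have h2: "hint Q (ci + 1) = {ci + 1 .. e}" unfolding hint_def using assms(2,3) by simp
  have "\<not> a \<le> ci"
  proof
    assume "a \<le> ci"
    hence "hint Q ci \<inter> hint Q (ci + 1) = {}" unfolding h1 h2 by auto
    thus False using assms(4) unfolding normal_at_def by simp
  qed
  moreover have "\<not> e \<le> a"
  proof
    assume "e \<le> a"
    hence "hint Q (ci + 1) \<subseteq> hint Q ci" unfolding h1 h2 by auto
    thus False using assms(4) unfolding normal_at_def by simp
  qed
  ultimately have "ci + 1 < a" "a < e" using assms(1) unfolding a_def by auto
  hence "ci - b < m - 1" "a - b < m - 1" "Q (b + (ci - b)) = b + (a - b)"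
    using assms(5,6) unfolding a_def by auto
  thus ?thesis unfolding topp_def by blast
qed



lemma LL:
  assumes "j + 2 \<le> m" "b + m \<le> N" "pairing_ok N Q" "\<forall>Q'. topp b m Q' \<longrightarrow> H Q' = 0"
  shows "zz * LS N b (alpha_aux j m) Q H = (if Q (b + m - (j + 2)) = b + m - 1 then H Q else 0)"
  using assms
proof (induction j arbitrary: Q H)
  case 0
  let ?i = "b + (m - 2)"
  have "LS N b (alpha_aux 0 m) Q H = RSK N [RC ?i, LC ?i] Q H"
    unfolding LS_def by simp
  also have "\<dots> = (if Q ?i = ?i + 1 then inverse zz * H Q else 0)"
  proof (cases "Q ?i = ?i + 1")
    case True
    note r = rc_lc[OF 0(3) True]
    have "N - 2 + 2 = N" using 0 by auto
    then show ?thesis using True r 0(3) by simp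
  qed simp
  finally show ?case using zz_nz 0(1) by (auto simp: numeral_eq_Suc)
next
  case (Suc j)
  define ci where "ci = b + (m - (j + 3))"
  define e where "e = b + m - 1"
  define A where "A = alpha_aux j m"
  let ?X = "\<lambda>Q F. RSK N [Cr ci] Q F"
  have ci1: "ci + 1 < e" "b \<le> ci" "ci + 3 \<le> b + m" "e < N" using Suc.prems unfolding ci_def e_def by auto
  have cnt: "\<forall>x\<in>set A. cntpres (snd x)" unfolding A_def by (rule alpha_cnt)
  have N2: "2 \<le> N" using Suc.prems by auto
  have ciidx: "b + m - (Suc j + 2) = ci" "b + m - (j + 2) = ci + 1" unfolding ci_def using Suc.prems by auto
  have IH: "\<And>Q H. pairing_ok N Q \<Longrightarrow> \<forall>Q'. topp b m Q' \<longrightarrow> H Q' = 0 \<Longrightarrow>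
      zz * LS N b A Q H = (if Q (ci + 1) = e then H Q else 0)"
  proof -
    fix Q and H :: "(nat \<Rightarrow> nat) \<Rightarrow> rf" assume that: "pairing_ok N Q" "\<forall>Q'. topp b m Q' \<longrightarrow> H Q' = 0"
    have "zz * LS N b (alpha_aux j m) Q H = (if Q (b+m-(j+2)) = b+m-1 then H Q else 0)"
      using Suc.IH[OF _ Suc.prems(2) that] Suc.prems(1) by simp
    thus "zz * LS N b A Q H = (if Q (ci + 1) = e then H Q else 0)" unfolding A_def e_def ciidx(2) .
  qed
  have alpha: "alpha_aux (Suc j) m = tmul (tmul [(1, [Cr (m - (j + 3))])] A) [(1, [Cr (m - (j + 3))])]
      @ cscale (- zz) (tmul [(1, [Cr (m - (j + 3))])] A) @ cscale (- zz) (tmul A [(1, [Cr (m - (j + 3))])])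
      @ cscale (zz ^ 2) A"
    unfolding A_def by (simp add: Let_def)
  have cnt2: "\<forall>x\<in>set (tmul [(1, [Cr (m - (j + 3))])] A). cntpres (snd x)"
    using cnt unfolding tmul_S_left cntpres_def by (auto split: prod.splits)
  have X: "\<And>Q F. pairing_ok N Q \<Longrightarrow> ?X Q F = (if Q ci \<noteq> ci + 1 then (if normal_at ci Q then zz * F Q else 0) + F (tQ ci Q) else 0)"
    using X_eq ci1 by auto
  have vanish: "\<forall>Q'. topp b m Q' \<longrightarrow> ?X Q' H = 0"
  proof (intro allI impI)
    fix Q' assume t: "topp b m Q'"
    have "topp b m (tQ ci Q')" using topp_tQ[OF ci1(2,3) t] .
    thus "?X Q' H = 0" using t Suc.prems(4) by simp
  qed
  define H1 where "H1 = (\<lambda>Q'. ?X Q' H)"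
  have LSsum: "zz * LS N b (alpha_aux (Suc j) m) Q H =
      ?X Q (\<lambda>Q'. zz * LS N b A Q' H1) - zz * (zz * LS N b A Q H1)
      - zz * ?X Q (\<lambda>Q'. zz * LS N b A Q' H) + zz ^ 2 * (zz * LS N b A Q H)"
    unfolding alpha LS_append LS_cscale LS_left LS_right[OF cnt2 N2] LS_right[OF cnt N2] H1_def
    by (simp add: RSK_mult ci_def algebra_simps)
  have e1: "?X Q (\<lambda>Q'. zz * LS N b A Q' H1) = ?X Q (\<lambda>Q'. if Q' (ci + 1) = e then H1 Q' else 0)"
    apply (rule RSK_cong[OF Suc.prems(3)])
    using IH vanish unfolding H1_def by simp
  have e2: "?X Q (\<lambda>Q'. zz * LS N b A Q' H) = ?X Q (\<lambda>Q'. if Q' (ci + 1) = e then H Q' else 0)"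
    apply (rule RSK_cong[OF Suc.prems(3)])
    using IH Suc.prems(4) by simp
  have e3: "zz * LS N b A Q H1 = (if Q (ci + 1) = e then H1 Q else 0)"
    using IH[OF Suc.prems(3)] vanish unfolding H1_def by simp
  have e4: "zz * LS N b A Q H = (if Q (ci + 1) = e then H Q else 0)"
    using IH[OF Suc.prems(3,4)] .
  define t where "t = tQ ci Q"
  have pt: "pairing_ok N t" unfolding t_def using pok_tQ[OF Suc.prems(3)] ci1 by auto
  have inv: "\<And>j. Q (Q j) = j" using pok_invol[OF Suc.prems(3)] .
  have f1: "t (ci + 1) = e \<longleftrightarrow> Q ci = e" unfolding t_def tQ_app using ci1 unfolding tr_def by auto
  have f2: "t ci \<noteq> ci + 1 \<longleftrightarrow> Q ci \<noteq> ci + 1" unfolding t_def tQ_app using inv unfolding tr_def by (auto) (metis inv n_not_Suc_n)+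
  have f3: "\<not> (Q (ci + 1) = e \<and> Q ci = e)" using inv by (metis n_not_Suc_n Suc_eq_plus1)
  have f4: "Q ci \<noteq> ci + 1 \<Longrightarrow> Q (ci + 1) = e \<Longrightarrow> \<not> normal_at ci Q \<Longrightarrow> H Q = 0 \<and> H t = 0"
    using nonnormal_topp[of Q ci e b m] ci1 Suc.prems(4) topp_tQ[OF ci1(2,3)] unfolding e_def t_def by auto
  have f5: "Q ci \<noteq> ci + 1 \<Longrightarrow> Q ci = e \<Longrightarrow> \<not> normal_at ci t \<Longrightarrow> H t = 0"
    using nonnormal_topp[of t ci e b m] ci1 Suc.prems(4) f1 f2 unfolding e_def by auto
  have f6: "Q ci = ci + 1 \<Longrightarrow> Q (ci + 1) \<noteq> e \<and> Q ci \<noteq> e" 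
  proof -
    assume a: "Q ci = ci + 1"
    hence "Q (ci + 1) = ci" using inv by metis
    thus ?thesis using a ci1(1) by auto
  qed
  have tt: "tQ ci t = Q" unfolding t_def by simp
  show ?case
    unfolding LSsum e1 e2 e3 e4 ciidx
    unfolding X[OF Suc.prems(3)] e_def[symmetric] t_def[symmetric]
    unfolding H1_def X[OF pt] X[OF Suc.prems(3)] t_def[symmetric] tt
    using f1 f2 f3 f4 f5 f6 ci1(1)
    by (cases "Q ci \<noteq> ci + 1"; cases "normal_at ci Q"; cases "normal_at ci t";
        cases "Q (ci + 1) = e"; cases "Q ci = e") (auto simp: algebra_simps power2_eq_square)
qed



lemma BL:
  assumes "\<forall>x\<in>set w. \<exists>i. x = Cr i \<and> b \<le> i \<and> i + 3 \<le> b + m"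
    "\<forall>Q'. topp b m Q' \<longrightarrow> H Q' = 0" "topp b m Q"
  shows "RSK N w Q H = 0"
  using assms
proof (induction w arbitrary: Q)
  case Nil then show ?case by simp
next
  case (Cons x w)
  then obtain i where i: "x = Cr i" "b \<le> i" "i + 3 \<le> b + m" by auto
  have "topp b m (tQ i Q)" using topp_tQ[OF i(2,3) Cons.prems(3)] .
  then show ?case using Cons i by simp
qed

definition RG :: "nat \<Rightarrow> piece list \<Rightarrow> (nat \<Rightarrow> nat) \<Rightarrow> (nat set \<times> (nat \<Rightarrow> nat \<Rightarrow> nat)) set" where
  "RG c w Q = {(Sw, P).
      Sw \<subseteq> {k. k < length w \<and> is_Cr (w ! k)} \<and> P 0 = Q \<and>
      (\<forall>k\<le>length w. pairing_ok (cntf c w k) (P k)) \<and>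
      (\<forall>k>length w. P k = id) \<and>
      (\<forall>k<length w. ruling_step (w ! k) (k \<in> Sw) (P k) (P (Suc k)))}"

definition consr :: "bool \<Rightarrow> (nat \<Rightarrow> nat) \<Rightarrow> nat set \<times> (nat \<Rightarrow> nat \<Rightarrow> nat) \<Rightarrow> nat set \<times> (nat \<Rightarrow> nat \<Rightarrow> nat)" where
  "consr b Q \<rho> = ((if b then insert 0 else id) (Suc ` fst \<rho>), (\<lambda>k. case k of 0 \<Rightarrow> Q | Suc k' \<Rightarrow> snd \<rho> k'))"

definition Steps :: "nat \<Rightarrow> piece \<Rightarrow> (nat \<Rightarrow> nat) \<Rightarrow> (bool \<times> (nat \<Rightarrow> nat)) set" where
  "Steps c pc Q = {(b, Q'). ruling_step pc b Q Q' \<and> (b \<longrightarrow> is_Cr pc) \<and> pairing_ok (cnt_after c pc) Q'}"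

lemma cntf_0[simp]: "cntf c w 0 = c" unfolding cntf_def by simp
lemma cntf_Suc[simp]: "cntf c (pc # w) (Suc k) = cntf (cnt_after c pc) w k" unfolding cntf_def by simp

lemma RG_cons:
  assumes "pairing_ok c Q"
  shows "RG c (pc # w) Q = (\<Union>(b, Q')\<in>Steps c pc Q. consr b Q ` RG (cnt_after c pc) w Q')"
proof
  show "RG c (pc # w) Q \<subseteq> (\<Union>(b, Q')\<in>Steps c pc Q. consr b Q ` RG (cnt_after c pc) w Q')"
  proof
    fix \<rho> assume r: "\<rho> \<in> RG c (pc # w) Q"
    obtain Sw P where rp: "\<rho> = (Sw, P)" by (cases \<rho>)
    note R = r[unfolded rp RG_def, simplified]
    define b where "b = (0 \<in> Sw)"
    define Sw' where "Sw' = {k. Suc k \<in> Sw}"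
    define P' where "P' = (\<lambda>k. P (Suc k))"
    have R1: "Sw \<subseteq> {k. k < Suc (length w) \<and> is_Cr ((pc # w) ! k)}" "P 0 = Q"
      "\<forall>k\<le>Suc (length w). pairing_ok (cntf c (pc # w) k) (P k)"
      "\<forall>k<Suc (length w). ruling_step ((pc # w) ! k) (k \<in> Sw) (P k) (P (Suc k))"
      using R by auto
    have st: "(b, P 1) \<in> Steps c pc Q"
      unfolding Steps_def b_def using R1(1) R1(2) R1(3)[rule_format, of 1] R1(4)[rule_format, of 0]
      by auto
    have in2: "(Sw', P') \<in> RG (cnt_after c pc) w (P 1)"
      unfolding RG_def
    proof (clarsimp, intro conjI)
      show "Sw' \<subseteq> {k. k < length w \<and> is_Cr (w ! k)}" using R unfolding Sw'_def by auto
      show "P' 0 = P (Suc 0)" unfolding P'_def by simp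
      show "\<forall>k\<le>length w. pairing_ok (cntf (cnt_after c pc) w k) (P' k)"
        using R unfolding P'_def by (metis Suc_le_mono cntf_Suc)
      show "\<forall>k>length w. P' k = id" using R unfolding P'_def by auto
      show "\<forall>k<length w. ruling_step (w ! k) (k \<in> Sw') (P' k) (P' (Suc k))"
      proof (intro allI impI)
        fix k assume "k < length w"
        then have "ruling_step ((pc#w) ! Suc k) (Suc k \<in> Sw) (P (Suc k)) (P (Suc (Suc k)))" using R1(4) by auto
        thus "ruling_step (w ! k) (k \<in> Sw') (P' k) (P' (Suc k))" unfolding P'_def Sw'_def by simp
      qed
    qed
    have e1: "Sw = (if b then insert 0 else id) (Suc ` Sw')"
    proof (rule set_eqI)
      fix x show "x \<in> Sw \<longleftrightarrow> x \<in> (if b then insert 0 else id) (Suc ` Sw')"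
        unfolding b_def Sw'_def by (cases x) auto
    qed
    have e2: "P = (\<lambda>k. case k of 0 \<Rightarrow> Q | Suc k' \<Rightarrow> P' k')"
      using R1(2) unfolding P'_def by (auto simp: fun_eq_iff split: nat.splits)
    have eq: "\<rho> = consr b Q (Sw', P')"
      unfolding rp consr_def fst_conv snd_conv using e1 e2 by simp
    show "\<rho> \<in> (\<Union>(b, Q')\<in>Steps c pc Q. consr b Q ` RG (cnt_after c pc) w Q')"
      using st in2 eq by blast
  qed
next
  show "(\<Union>(b, Q')\<in>Steps c pc Q. consr b Q ` RG (cnt_after c pc) w Q') \<subseteq> RG c (pc # w) Q"
  proof (intro subsetI)
    fix \<rho> assume "\<rho> \<in> (\<Union>(b, Q')\<in>Steps c pc Q. consr b Q ` RG (cnt_after c pc) w Q')"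
    then obtain b Q' Sw P where st: "(b, Q') \<in> Steps c pc Q" and r: "(Sw, P) \<in> RG (cnt_after c pc) w Q'"
      and rr: "\<rho> = consr b Q (Sw, P)" by auto
    note R = r[unfolded RG_def, simplified]
    note S = st[unfolded Steps_def, simplified]
    define Sw2 where "Sw2 = (if b then insert 0 else id) (Suc ` Sw)"
    define P2 where "P2 = (\<lambda>k. case k of 0 \<Rightarrow> Q | Suc k' \<Rightarrow> P k')"
    have A1: "Sw2 \<subseteq> {k. k < length (pc # w) \<and> is_Cr ((pc # w) ! k)}"
      unfolding Sw2_def using R S by auto
    have A2: "P2 0 = Q" unfolding P2_def by simp
    have A3: "\<forall>k\<le>length (pc # w). pairing_ok (cntf c (pc # w) k) (P2 k)"
    proof (intro allI impI)
      fix k assume "k \<le> length (pc # w)"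
      then show "pairing_ok (cntf c (pc # w) k) (P2 k)"
        unfolding P2_def using R assms by (cases k) auto
    qed
    have A4: "\<forall>k>length (pc # w). P2 k = id"
      unfolding P2_def using R by (auto split: nat.splits)
    have A5: "\<forall>k<length (pc # w). ruling_step ((pc # w) ! k) (k \<in> Sw2) (P2 k) (P2 (Suc k))"
    proof (intro allI impI)
      fix k assume k: "k < length (pc # w)"
      show "ruling_step ((pc # w) ! k) (k \<in> Sw2) (P2 k) (P2 (Suc k))"
      proof (cases k)
        case 0 then show ?thesis using S R unfolding Sw2_def P2_def by auto
      next
        case (Suc k') then show ?thesis using R k unfolding Sw2_def P2_def by (auto simp: image_iff)
      qed
    qed
    have "(Sw2, P2) \<in> RG c (pc # w) Q"
      unfolding RG_def using A1 A2 A3 A4 A5 by simp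
    moreover have "consr b Q (Sw, P) = (Sw2, P2)" unfolding consr_def Sw2_def P2_def by simp
    ultimately show "\<rho> \<in> RG c (pc # w) Q" using rr by simp
  qed
qed



lemma Steps_Cr: "pairing_ok c Q \<Longrightarrow> Steps c (Cr i) Q =
   (if Q i \<noteq> i + 1 \<and> normal_at i Q then {(True, Q)} else {}) \<union>
   (if Q i \<noteq> i + 1 \<and> pairing_ok c (tQ i Q) then {(False, tQ i Q)} else {})"
  unfolding Steps_def ruling_step_def tQ_def by auto

lemma Steps_LC: "Steps c (LC i) Q = (if pairing_ok (c + 2) (lcQ i Q) then {(False, lcQ i Q)} else {})"
  unfolding Steps_def ruling_step_def lcQ_def by auto

lemma Steps_RC: "Steps c (RC i) Q = (if Q i = i + 1 \<and> pairing_ok (c - 2) (rcQ i Q) then {(False, rcQ i Q)} else {})"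
  unfolding Steps_def ruling_step_def rcQ_def by auto

lemma Steps_finite: "pairing_ok c Q \<Longrightarrow> finite (Steps c pc Q)"
  by (cases pc) (auto simp: Steps_Cr Steps_LC Steps_RC)

definition wt :: "piece list \<Rightarrow> (nat \<Rightarrow> (nat \<Rightarrow> nat) \<Rightarrow> rf) \<Rightarrow> nat set \<times> (nat \<Rightarrow> nat \<Rightarrow> nat) \<Rightarrow> rf" where
  "wt w g \<rho> = zz powi (int (card (fst \<rho>)) - int (length (filter is_RC w))) * (\<Prod>k\<le>length w. g k (snd \<rho> k))"

lemma card_consr: "finite S \<Longrightarrow> card ((if b then insert 0 else id) (Suc ` S)) = (if b then 1 else 0) + card S"
  by (auto simp: card_image)

lemma wt_consr:
  assumes "finite (fst \<rho>)"
  shows "wt (pc # w) g (consr b Q \<rho>) = g 0 Q * (if b then zz else 1) * (if is_RC pc then inverse zz else 1) * wt w (\<lambda>k. g (Suc k)) \<rho>"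
proof -
  define e where "e = int (card (fst \<rho>)) - int (length (filter is_RC w))"
  have ex: "int (card (fst (consr b Q \<rho>))) - int (length (filter is_RC (pc # w)))
      = e + ((if b then 1 else 0) + (if is_RC pc then -1 else 0))"
    unfolding consr_def e_def using card_consr[OF assms, of b] by auto
  have pw: "zz powi (e + ((if b then 1 else 0) + (if is_RC pc then -1 else 0)))
      = zz powi e * (if b then zz else 1) * (if is_RC pc then inverse zz else 1)"
    using zz_nz by (auto simp: power_int_add power_int_minus)
  have pr: "(\<Prod>k\<le>length (pc # w). g k (snd (consr b Q \<rho>) k)) = g 0 Q * (\<Prod>k\<le>length w. g (Suc k) (snd \<rho> k))"
    unfolding length_Cons prod.atMost_Suc_shift consr_def by simp
  show ?thesis unfolding wt_def ex pw pr e_def[symmetric] by (simp add: algebra_simps)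
qed

lemma RG_Nil: "pairing_ok c Q \<Longrightarrow> RG c [] Q = {({}, \<lambda>k. if k = 0 then Q else id)}"
  unfolding RG_def by (auto simp: fun_eq_iff)

lemma RG_fst_finite: "\<rho> \<in> RG c w Q \<Longrightarrow> finite (fst \<rho>)"
proof -
  assume "\<rho> \<in> RG c w Q"
  hence "fst \<rho> \<subseteq> {k. k < length w}" unfolding RG_def by auto
  thus ?thesis by (rule finite_subset) simp
qed

lemma RG_snd0: "\<rho> \<in> RG c w Q \<Longrightarrow> snd \<rho> 0 = Q"
  unfolding RG_def by auto

lemma consr_inj: "inj_on (consr b Q) X"
proof (rule inj_onI)
  fix x y assume "consr b Q x = consr b Q y"
  hence a: "(if b then insert 0 else id) (Suc ` fst x) = (if b then insert 0 else id) (Suc ` fst y)"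
    and c: "\<And>k. snd x k = snd y k"
    unfolding consr_def by (auto simp: fun_eq_iff split: nat.splits)
  have "Suc ` fst x = Suc ` fst y"
  proof -
    have "Suc ` fst x = ((if b then insert 0 else id) (Suc ` fst x)) - {0}" by auto
    also have "\<dots> = ((if b then insert 0 else id) (Suc ` fst y)) - {0}" using a by simp
    also have "\<dots> = Suc ` fst y" by auto
    finally show ?thesis .
  qed
  hence "fst x = fst y" by (simp add: inj_image_eq_iff)
  thus "x = y" using c by (simp add: prod_eq_iff fun_eq_iff)
qed

lemma sum2: "x1 \<noteq> x2 \<Longrightarrow> sum f ((if C1 then {x1} else {}) \<union> (if C2 then {x2} else {})) =
    (if C1 then f x1 else 0) + (if C2 then f x2 else 0)"
  by (auto simp: add.commute)

lemma RG_sum: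
  assumes "pairing_ok c Q"
  shows "finite (RG c w Q) \<and> (\<Sum>\<rho>\<in>RG c w Q. wt w g \<rho>) = RSg c w Q g"
  using assms
proof (induction w arbitrary: c Q g)
  case Nil
  show ?case unfolding RG_Nil[OF Nil.prems] wt_def by simp
next
  case (Cons pc w)
  let ?c' = "cnt_after c pc"
  let ?I = "Steps c pc Q"
  let ?A = "\<lambda>x. consr (fst x) Q ` RG ?c' w (snd x)"
  have pokI: "\<And>x. x \<in> ?I \<Longrightarrow> pairing_ok ?c' (snd x)" unfolding Steps_def by auto
  have finA: "\<And>x. x \<in> ?I \<Longrightarrow> finite (?A x)" using Cons.IH pokI by blast
  have eq: "RG c (pc # w) Q = (\<Union>x\<in>?I. ?A x)" unfolding RG_cons[OF Cons.prems] by (simp add: split_def)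
  have finI: "finite ?I" using Steps_finite[OF Cons.prems] .
  have disj: "\<forall>x\<in>?I. \<forall>y\<in>?I. x \<noteq> y \<longrightarrow> ?A x \<inter> ?A y = {}"
  proof (intro ballI impI)
    fix x y assume xy: "x \<in> ?I" "y \<in> ?I" "x \<noteq> y"
    show "?A x \<inter> ?A y = {}"
    proof (rule ccontr)
      assume "?A x \<inter> ?A y \<noteq> {}"
      then obtain z where z: "z \<in> ?A x" "z \<in> ?A y" by blast
      then obtain r1 r2 where r: "r1 \<in> RG ?c' w (snd x)" "r2 \<in> RG ?c' w (snd y)"
        "consr (fst x) Q r1 = consr (fst y) Q r2" by (metis (no_types, lifting) imageE)
      have "fst x = fst y"
      proof -
        have "0 \<in> fst (consr (fst x) Q r1) \<longleftrightarrow> fst x" unfolding consr_def by auto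
        moreover have "0 \<in> fst (consr (fst y) Q r2) \<longleftrightarrow> fst y" unfolding consr_def by auto
        ultimately show ?thesis using r(3) by simp
      qed
      moreover have "snd x = snd y"
      proof -
        have "snd (consr (fst x) Q r1) 1 = snd x" using RG_snd0[OF r(1)] unfolding consr_def by simp
        moreover have "snd (consr (fst y) Q r2) 1 = snd y" using RG_snd0[OF r(2)] unfolding consr_def by simp
        ultimately show ?thesis using r(3) by simp
      qed
      ultimately show False using xy(3) by (simp add: prod_eq_iff)
    qed
  qed
  have fin: "finite (RG c (pc # w) Q)" unfolding eq using finI finA by blast
  have "(\<Sum>\<rho>\<in>RG c (pc # w) Q. wt (pc # w) g \<rho>) = (\<Sum>x\<in>?I. \<Sum>\<rho>\<in>?A x. wt (pc # w) g \<rho>)"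
    unfolding eq by (rule sum.UNION_disjoint[OF finI]) (use finA disj in auto)
  also have "\<dots> = (\<Sum>x\<in>?I. \<Sum>\<rho>\<in>RG ?c' w (snd x). wt (pc # w) g (consr (fst x) Q \<rho>))"
    by (rule sum.cong[OF refl]) (simp add: sum.reindex[OF consr_inj])
  also have "\<dots> = (\<Sum>x\<in>?I. g 0 Q * (if fst x then zz else 1) * (if is_RC pc then inverse zz else 1) *
       RSg ?c' w (snd x) (\<lambda>k. g (Suc k)))"
  proof (rule sum.cong[OF refl])
    fix x assume x: "x \<in> ?I"
    have "(\<Sum>\<rho>\<in>RG ?c' w (snd x). wt (pc # w) g (consr (fst x) Q \<rho>)) =
        (\<Sum>\<rho>\<in>RG ?c' w (snd x). g 0 Q * (if fst x then zz else 1) * (if is_RC pc then inverse zz else 1) * wt w (\<lambda>k. g (Suc k)) \<rho>)"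
      by (rule sum.cong[OF refl]) (simp add: wt_consr RG_fst_finite)
    also have "\<dots> = g 0 Q * (if fst x then zz else 1) * (if is_RC pc then inverse zz else 1) * (\<Sum>\<rho>\<in>RG ?c' w (snd x). wt w (\<lambda>k. g (Suc k)) \<rho>)"
      by (simp add: sum_distrib_left)
    also have "\<dots> = g 0 Q * (if fst x then zz else 1) * (if is_RC pc then inverse zz else 1) * RSg ?c' w (snd x) (\<lambda>k. g (Suc k))"
      using Cons.IH[OF pokI[OF x]] by simp
    finally show "(\<Sum>\<rho>\<in>RG ?c' w (snd x). wt (pc # w) g (consr (fst x) Q \<rho>)) = g 0 Q * (if fst x then zz else 1) * (if is_RC pc then inverse zz else 1) *
       RSg ?c' w (snd x) (\<lambda>k. g (Suc k))" .
  qed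
  also have "\<dots> = RSg c (pc # w) Q g"
  proof (cases pc)
    case (Cr i)
    have ne: "(True, Q) \<noteq> (False, tQ i Q)" by simp
    show ?thesis unfolding Cr Steps_Cr[OF Cons.prems] sum2[OF ne]
      using Cons.prems by (auto simp: algebra_simps)
  next
    case (LC i) then show ?thesis by (simp add: Steps_LC)
  next
    case (RC i) then show ?thesis by (simp add: Steps_RC algebra_simps)
  qed
  finally show ?case using fin by simp
qed



lemma RSg_cut:
  assumes "L \<le> length w" "\<forall>k<L. \<forall>Q. g k Q = 1"
  shows "RSg c w Q g = RSK c (take L w) Q (\<lambda>Q'. RSg (cntf c w L) (drop L w) Q' (\<lambda>j. g (L + j)))"
  using assms
proof (induction w arbitrary: L c Q g)
  case Nil then show ?case by simp
next
  case (Cons pc w)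
  show ?case
  proof (cases L)
    case 0 then show ?thesis by simp
  next
    case (Suc L')
    have g0: "g 0 Q = 1" using Cons.prems Suc by auto
    have ih: "\<And>c Q. RSg c w Q (\<lambda>k. g (Suc k)) = RSK c (take L' w) Q (\<lambda>Q'. RSg (cntf c w L') (drop L' w) Q' (\<lambda>j. g (Suc (L' + j))))"
      using Cons.IH[of L' "\<lambda>k. g (Suc k)"] Cons.prems Suc by auto
    show ?thesis unfolding Suc using g0 ih by simp
  qed
qed

lemma RSg_factor:
  assumes "\<forall>j Q. g j Q = (if j = 0 then r Q else 1) * h j Q"
  shows "RSg c w Q g = r Q * RSg c w Q h"
proof (cases w)
  case Nil then show ?thesis using assms by simp
next
  case (Cons pc w')
  have "(\<lambda>k. g (Suc k)) = (\<lambda>k. h (Suc k))" using assms by (auto simp: fun_eq_iff)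
  then show ?thesis using assms Cons by simp
qed

lemma RSg_cong_ext: "(\<And>j Q. g j Q = h j Q) \<Longrightarrow> RSg c w Q g = RSg c w Q h"
  by (metis ext)

lemma rulings_RG: "rulings W = RG 0 W id"
proof -
  have "\<And>P. pairing_ok 0 (P 0) \<Longrightarrow> P 0 = id" unfolding pairing_ok_def by (auto simp: fun_eq_iff)
  then show ?thesis unfolding rulings_def RG_def cntf_0
    by (auto simp: pairing_ok_def)
qed

lemma sum_filter_wt:
  assumes "q \<le> length W"
  shows "(\<Sum>\<rho>\<in>{\<rho>\<in>RG 0 W id. R (snd \<rho> q)}. zz powi jr W \<rho>) =
     (\<Sum>\<rho>\<in>RG 0 W id. wt W (\<lambda>k Q. if k = q then (if R Q then 1 else 0) else 1) \<rho>)"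
proof -
  have fin: "finite (RG 0 W id)" using RG_sum[of 0 id W] unfolding pairing_ok_def by simp
  show ?thesis
    unfolding sum.inter_filter[OF fin] wt_def jr_def
    using assms by (intro sum.cong) auto
qed

lemma sum_filter_wt2:
  assumes "q \<le> length W" "qs \<le> length W"
  shows "(\<Sum>\<rho>\<in>{\<rho>\<in>RG 0 W id. R (snd \<rho> q) \<and> S (snd \<rho> qs)}. zz powi jr W \<rho>) =
     (\<Sum>\<rho>\<in>RG 0 W id. wt W (\<lambda>k Q. (if k = qs then (if S Q then 1 else 0) else 1) * (if k = q then (if R Q then 1 else 0) else 1)) \<rho>)"
proof -
  have fin: "finite (RG 0 W id)" using RG_sum[of 0 id W] unfolding pairing_ok_def by simp
  show ?thesis
    unfolding sum.inter_filter[OF fin] wt_def jr_def prod.distrib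
    using assms by (intro sum.cong) auto
qed

lemma pok0: "pairing_ok 0 id" unfolding pairing_ok_def by simp

lemma allCr_cnt: "(\<forall>x\<in>set w. is_Cr x) \<Longrightarrow> foldl cnt_after c w = c"
proof (induction w arbitrary: c)
  case (Cons x w) then show ?case by (cases x) auto
qed simp

lemma LC_cnt: "foldl cnt_after c (map (\<lambda>t. LC (f t)) xs) = c + 2 * length xs"
  by (induction xs arbitrary: c) auto

lemma RC_cnt: "foldl cnt_after c (map (\<lambda>t. RC (f t)) xs) = c - 2 * length xs"
  by (induction xs arbitrary: c) auto

lemma ncopy_piece_cnt: "piece_ok c pc \<Longrightarrow> foldl cnt_after (n * c) (ncopy_piece n pc) = n * cnt_after c pc"
proof (cases pc)
  case (Cr i) then show ?thesis unfolding ncopy_piece_def by (simp add: allCr_cnt)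
next
  case (LC i)
  have "foldl cnt_after (n * c) (ncopy_piece n pc) = foldl cnt_after (n * c + 2 * n)
     (concat (map (\<lambda>u. map (\<lambda>r. Cr (n * i + 2 * u - 1 - r)) [0..<u]) [1..<n]))"
    unfolding LC ncopy_piece_def by (simp add: LC_cnt)
  also have "\<dots> = n * c + 2 * n" by (rule allCr_cnt) auto
  finally show ?thesis using LC by (simp add: algebra_simps)
next
  case (RC i)
  have "foldl cnt_after (n * c) (ncopy_piece n pc) = foldl cnt_after (n * c)
     (rev (concat (map (\<lambda>u. map (\<lambda>r. Cr (n * i + 2 * u - 1 - r)) [0..<u]) [1..<n]))) - 2 * n"
    unfolding RC ncopy_piece_def by (simp add: RC_cnt)
  also have "foldl cnt_after (n * c)
     (rev (concat (map (\<lambda>u. map (\<lambda>r. Cr (n * i + 2 * u - 1 - r)) [0..<u]) [1..<n]))) = n * c"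
    by (rule allCr_cnt) auto
  finally show ?thesis using RC by (simp add: diff_mult_distrib2)
qed

lemma ncopy_cnt: "(\<forall>k<length u. piece_ok (cntf c u k) (u ! k)) \<Longrightarrow>
    foldl cnt_after (n * c) (ncopy n u) = n * foldl cnt_after c u"
proof (induction u arbitrary: c)
  case Nil then show ?case by (simp add: ncopy_def)
next
  case (Cons pc u)
  have p0: "piece_ok c pc" using Cons.prems[rule_format, of 0] by simp
  have pt: "\<forall>k<length u. piece_ok (cntf (cnt_after c pc) u k) (u ! k)"
    using Cons.prems by (metis Suc_less_eq cntf_Suc length_Cons nth_Cons_Suc)
  have "ncopy n (pc # u) = ncopy_piece n pc @ ncopy n u" unfolding ncopy_def by simp
  then show ?case using ncopy_piece_cnt[OF p0, of n] Cons.IH[OF pt] by simp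
qed

lemma shift_cnt_add: "(\<forall>k<length w. piece_ok (cntf c w k) (w ! k)) \<Longrightarrow> foldl cnt_after (c + d) w = foldl cnt_after c w + d"
proof (induction w arbitrary: c)
  case Nil then show ?case by simp
next
  case (Cons pc w)
  have p0: "piece_ok c pc" using Cons.prems[rule_format, of 0] by simp
  have pt: "\<forall>k<length w. piece_ok (cntf (cnt_after c pc) w k) (w ! k)"
    using Cons.prems by (metis Suc_less_eq cntf_Suc length_Cons nth_Cons_Suc)
  have "cnt_after (c + d) pc = cnt_after c pc + d" using p0 by (cases pc) auto
  then show ?case using Cons.IH[OF pt] by simp
qed

lemma valid_cnt: "valid_front n w n \<Longrightarrow> n \<le> c \<Longrightarrow> foldl cnt_after c w = c"
  using shift_cnt_add[of w n "c - n"] unfolding valid_front_def cntf_def by auto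



definition redp :: "nat \<Rightarrow> nat \<Rightarrow> (nat \<Rightarrow> nat) \<Rightarrow> rf" where
  "redp b kk Q = (if (\<forall>a<kk. \<forall>c<kk. Q (b + a) \<noteq> b + c) then 1 else 0)"

lemma inner_cut:
  assumes "foldl cnt_after c0 (map (shiftp b) eta) = c0"
  shows "RSg c0 (map (shiftp b) eta @ B) Q (\<lambda>j Q'. if j = length eta then r Q' else 1)
       = RSK c0 (map (shiftp b) eta) Q (\<lambda>Q'. r Q' * RSg c0 B Q' (\<lambda>_ _. 1))"
proof -
  have e1: "RSg c0 (map (shiftp b) eta @ B) Q (\<lambda>j Q'. if j = length eta then r Q' else 1)
     = RSK c0 (map (shiftp b) eta) Q (\<lambda>Q'. RSg (cntf c0 (map (shiftp b) eta @ B) (length eta)) B Q'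
          (\<lambda>j Q''. if length eta + j = length eta then r Q'' else 1))"
    using RSg_cut[of "length eta" "map (shiftp b) eta @ B" "\<lambda>j Q'. if j = length eta then r Q' else 1" c0 Q]
    by simp
  have e2: "cntf c0 (map (shiftp b) eta @ B) (length eta) = c0"
    unfolding cntf_def using assms by simp
  have e3: "\<And>Q'. RSg c0 B Q' (\<lambda>j Q''. if length eta + j = length eta then r Q'' else 1) = r Q' * RSg c0 B Q' (\<lambda>_ _. 1)"
    by (rule RSg_factor) simp
  show ?thesis unfolding e1 e2 e3 ..
qed

lemma Rtilde_form:
  assumes "foldl cnt_after (foldl cnt_after 0 (ncopy n (take p wK))) (map (shiftp (n * s)) eta) = foldl cnt_after 0 (ncopy n (take p wK))"
  shows "Rtilde n wK p s kk eta = RSK 0 (ncopy n (take p wK)) id (\<lambda>Q.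
      RSK (foldl cnt_after 0 (ncopy n (take p wK))) (map (shiftp (n * s)) eta) Q (\<lambda>Q'. redp (n * s) kk Q' *
         RSg (foldl cnt_after 0 (ncopy n (take p wK))) (ncopy n (drop p wK)) Q' (\<lambda>_ _. 1)))"
proof -
  define A where "A = ncopy n (take p wK)"
  define B where "B = ncopy n (drop p wK)"
  define b where "b = n * s"
  define c0 where "c0 = foldl cnt_after 0 A"
  define W where "W = A @ map (shiftp b) eta @ B"
  define q where "q = length A + length eta"
  define R where "R = (\<lambda>Q::nat\<Rightarrow>nat. \<forall>a<kk. \<forall>c<kk. Q (b + a) \<noteq> b + c)"
  have ass: "foldl cnt_after c0 (map (shiftp b) eta) = c0" using assms unfolding c0_def A_def b_def .
  have "Rtilde n wK p s kk eta = (\<Sum>\<rho>\<in>{\<rho>\<in>RG 0 W id. R (snd \<rho> q)}. zz powi jr W \<rho>)"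
    unfolding Rtilde_def Let_def sat_def rulings_RG reduced_at_def R_def W_def q_def A_def B_def b_def
    by simp
  also have "\<dots> = (\<Sum>\<rho>\<in>RG 0 W id. wt W (\<lambda>k Q. if k = q then (if R Q then 1 else 0) else 1) \<rho>)"
    by (rule sum_filter_wt) (simp add: W_def q_def)
  also have "\<dots> = RSg 0 W id (\<lambda>k Q. if k = q then (if R Q then 1 else 0) else 1)"
    using RG_sum[OF pok0] by blast
  also have "\<dots> = RSK 0 A id (\<lambda>Q. RSg (cntf 0 W (length A)) (drop (length A) W) Q
        (\<lambda>j Q'. if length A + j = q then (if R Q' then 1 else 0) else 1))"
    using RSg_cut[of "length A" W "\<lambda>k Q. if k = q then (if R Q then 1 else 0) else 1" 0 id]
    by (simp add: W_def q_def)
  also have "cntf 0 W (length A) = c0" unfolding cntf_def W_def c0_def by simp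
  also have "drop (length A) W = map (shiftp b) eta @ B" unfolding W_def by simp
  also have "(\<lambda>j Q'. if length A + j = q then (if R Q' then 1 else 0) else 1) = (\<lambda>j Q'. if j = length eta then redp b kk Q' else 1)"
    unfolding q_def redp_def R_def by (auto simp: fun_eq_iff)
  also have "(\<lambda>Q. RSg c0 (map (shiftp b) eta @ B) Q (\<lambda>j Q'. if j = length eta then redp b kk Q' else 1))
     = (\<lambda>Q. RSK c0 (map (shiftp b) eta) Q (\<lambda>Q'. redp b kk Q' * RSg c0 B Q' (\<lambda>_ _. 1)))"
    using inner_cut[OF ass] by simp
  finally show ?thesis unfolding A_def B_def b_def c0_def .
qed

lemma Rtau_form:
  assumes "foldl cnt_after (foldl cnt_after 0 (ncopy n (take p wK))) (map (shiftp (n * s)) wb) = foldl cnt_after 0 (ncopy n (take p wK))"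
    "foldl cnt_after (foldl cnt_after 0 (ncopy n (take p wK))) (map (shiftp (n * s)) bw) = foldl cnt_after 0 (ncopy n (take p wK))"
  shows "Rtau n wK p s kt m (length wb) (wb @ bw) = RSK 0 (ncopy n (take p wK)) id (\<lambda>Q.
      RSK (foldl cnt_after 0 (ncopy n (take p wK))) (map (shiftp (n * s)) wb) Q (\<lambda>Q1.
        (if Q1 (n * s + (kt - 1)) = n * s + (m - 1) then 1 else 0) *
        RSK (foldl cnt_after 0 (ncopy n (take p wK))) (map (shiftp (n * s)) bw) Q1 (\<lambda>Q'. redp (n * s) (m - 1) Q' *
         RSg (foldl cnt_after 0 (ncopy n (take p wK))) (ncopy n (drop p wK)) Q' (\<lambda>_ _. 1))))"
proof -
  define A where "A = ncopy n (take p wK)"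
  define B where "B = ncopy n (drop p wK)"
  define b where "b = n * s"
  define c0 where "c0 = foldl cnt_after 0 A"
  define W where "W = A @ map (shiftp b) wb @ map (shiftp b) bw @ B"
  define q where "q = length A + (length wb + length bw)"
  define qs where "qs = length A + length wb"
  define R where "R = (\<lambda>Q::nat\<Rightarrow>nat. \<forall>a<m-1. \<forall>c<m-1. Q (b + a) \<noteq> b + c)"
  define S where "S = (\<lambda>Q::nat\<Rightarrow>nat. Q (b + (kt - 1)) = b + (m - 1))"
  have ass1: "foldl cnt_after c0 (map (shiftp b) wb) = c0" using assms unfolding c0_def A_def b_def by simp
  have ass2: "foldl cnt_after c0 (map (shiftp b) bw) = c0" using assms unfolding c0_def A_def b_def by simp
  define g2 where "g2 = (\<lambda>k Q. (if k = qs then (if S Q then 1 else 0) else 1) * (if k = q then (if R Q then 1 else (0::rf)) else 1))"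
  have "Rtau n wK p s kt m (length wb) (wb @ bw) = (\<Sum>\<rho>\<in>{\<rho>\<in>RG 0 W id. R (snd \<rho> q) \<and> S (snd \<rho> qs)}. zz powi jr W \<rho>)"
    unfolding Rtau_def Let_def sat_def rulings_RG reduced_at_def R_def S_def W_def q_def qs_def A_def B_def b_def
    by simp
  also have "\<dots> = (\<Sum>\<rho>\<in>RG 0 W id. wt W g2 \<rho>)"
    unfolding g2_def by (rule sum_filter_wt2) (simp_all add: W_def q_def qs_def)
  also have "\<dots> = RSg 0 W id g2"
    using RG_sum[OF pok0] by blast
  also have "\<dots> = RSK 0 (A @ map (shiftp b) wb) id (\<lambda>Q. RSg (cntf 0 W qs) (drop qs W) Q (\<lambda>j. g2 (qs + j)))"
    using RSg_cut[of qs W g2 0 id] by (simp add: W_def q_def qs_def g2_def)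
  also have "cntf 0 W qs = c0" unfolding cntf_def W_def qs_def using ass1 by (simp add: c0_def)
  also have "drop qs W = map (shiftp b) bw @ B" unfolding W_def qs_def by simp
  also have "(\<lambda>Q. RSg c0 (map (shiftp b) bw @ B) Q (\<lambda>j. g2 (qs + j))) =
      (\<lambda>Q. (if S Q then 1 else 0) * RSK c0 (map (shiftp b) bw) Q (\<lambda>Q'. redp b (m - 1) Q' * RSg c0 B Q' (\<lambda>_ _. 1)))"
  proof
    fix Q
    have "RSg c0 (map (shiftp b) bw @ B) Q (\<lambda>j. g2 (qs + j)) = (if S Q then 1 else 0) *
        RSg c0 (map (shiftp b) bw @ B) Q (\<lambda>j Q'. if j = length bw then redp b (m - 1) Q' else 1)"
      by (rule RSg_factor) (auto simp: g2_def q_def qs_def redp_def R_def)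
    thus "RSg c0 (map (shiftp b) bw @ B) Q (\<lambda>j. g2 (qs + j)) = (if S Q then 1 else 0) * RSK c0 (map (shiftp b) bw) Q (\<lambda>Q'. redp b (m - 1) Q' * RSg c0 B Q' (\<lambda>_ _. 1))"
      using inner_cut[OF ass2] by simp
  qed
  finally show ?thesis unfolding RSK_append A_def B_def b_def c0_def S_def
    using ass1[unfolded A_def B_def b_def c0_def] by simp
qed



lemma sum_list_concat': "sum_list (concat xss) = sum_list (map sum_list (xss :: rf list list))"
  by (induction xss) auto

lemma sum_swap: "sum_list (map (\<lambda>x. sum_list (map (\<lambda>y. f x y) ys)) xs) =
    sum_list (map (\<lambda>y. sum_list (map (\<lambda>x. f x y) xs)) (ys :: 'b list)) " for f :: "'a \<Rightarrow> 'b \<Rightarrow> rf"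
  by (induction xs) (auto simp: sum_list_addf)

lemma RSK_lin: "sum_list (map (\<lambda>x. fst x * RSK c w Q (f x)) xs) = RSK c w Q (\<lambda>Q'. sum_list (map (\<lambda>x. fst x * f x Q') xs))"
  by (induction xs) (auto simp: RSK_add RSK_mult RSK_zero)

lemma tmul_left_gen: "tmul [(1, v)] A = map (\<lambda>(a, w). (a, w @ v)) A"
  unfolding tmul_def by (simp add: split_def)

lemma Rtilde_lin_eq:
  "Rtilde_lin n wK p s kk (tmul [(1, bw)] (tmul al nu)) =
     sum_list (map (\<lambda>x. sum_list (map (\<lambda>y. fst x * fst y * Rtilde n wK p s kk ((snd y @ snd x) @ bw)) nu)) al)"
  unfolding Rtilde_lin_def tmul_left_gen
  unfolding tmul_def
  by (simp add: split_def comp_def map_concat sum_list_concat')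



lemma c0_bound:
  assumes "legendrian_knot_front wK" "p \<le> length wK" "s < cntf 0 wK p"
  shows "foldl cnt_after 0 (ncopy n (take p wK)) = n * cntf 0 wK p"
    "n * s + n \<le> foldl cnt_after 0 (ncopy n (take p wK))"
proof -
  have v: "\<forall>k<length wK. piece_ok (cntf 0 wK k) (wK ! k)"
    using assms(1) unfolding legendrian_knot_front_def valid_front_def by simp
  have vt: "\<forall>k<length (take p wK). piece_ok (cntf 0 (take p wK) k) (take p wK ! k)"
  proof (intro allI impI)
    fix k assume k: "k < length (take p wK)"
    have kp: "k \<le> p" using k by simp
    have "cntf 0 (take p wK) k = cntf 0 wK k" unfolding cntf_def using kp by (simp add: min_absorb1)
    thus "piece_ok (cntf 0 (take p wK) k) (take p wK ! k)" using v k by simp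
  qed
  have "foldl cnt_after (n * 0) (ncopy n (take p wK)) = n * foldl cnt_after 0 (take p wK)"
    by (rule ncopy_cnt[OF vt])
  thus e: "foldl cnt_after 0 (ncopy n (take p wK)) = n * cntf 0 wK p" unfolding cntf_def by simp
  have "s + 1 \<le> cntf 0 wK p" using assms(3) by simp
  hence "n * (s + 1) \<le> n * cntf 0 wK p" by (rule mult_le_mono2)
  thus "n * s + n \<le> foldl cnt_after 0 (ncopy n (take p wK))" unfolding e by simp
qed

lemma per_tangle:
  assumes c0: "foldl cnt_after 0 (ncopy n (take p wK)) = c0" "n * s + n \<le> c0"
    and km: "1 < k" "k \<le> m" "m \<le> n"
    and bw: "pos_perm_braid (m - 1) bw"
    and wb: "valid_front n wb n"
  shows "zz * sum_list (map (\<lambda>x. fst x * Rtilde n wK p s (m - 1) ((wb @ snd x) @ bw)) (alpha k m))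
       = Rtau n wK p s (m - k + 1) m (length wb) (wb @ bw)"
proof -
  define b where "b = n * s"
  define A where "A = ncopy n (take p wK)"
  define G where "G = (\<lambda>Q'. RSg c0 (ncopy n (drop p wK)) Q' (\<lambda>_ _. 1))"
  define Phi where "Phi = (\<lambda>Q'. redp b (m - 1) Q' * G Q')"
  define Psi where "Psi = (\<lambda>Q2. RSK c0 (map (shiftp b) bw) Q2 Phi)"
  have c0': "foldl cnt_after 0 A = c0" using c0 unfolding A_def by simp
  have n2: "2 \<le> c0" using c0 km by auto
  have cwb: "foldl cnt_after c0 (map (shiftp b) wb) = c0" using valid_cnt[OF wb] c0 by simp
  have bwCr: "\<forall>x\<in>set bw. \<exists>i. x = Cr i \<and> i + 1 < m - 1" using bw unfolding pos_perm_braid_def by simp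
  have cbw: "foldl cnt_after c0 (map (shiftp b) bw) = c0"
  proof -
    have "\<forall>x\<in>set bw. is_Cr x" using bwCr by auto
    thus ?thesis using allCr_cnt[of bw c0] by simp
  qed
  have calpha: "\<And>x. x \<in> set (alpha k m) \<Longrightarrow> foldl cnt_after c0 (map (shiftp b) (snd x)) = c0"
    using alpha_cnt n2 unfolding alpha_def cntpres_def by auto
  have LHSterm: "\<And>x. x \<in> set (alpha k m) \<Longrightarrow> Rtilde n wK p s (m - 1) ((wb @ snd x) @ bw)
      = RSK 0 A id (\<lambda>Q. RSK c0 (map (shiftp b) wb) Q (\<lambda>Q1. RSK c0 (map (shiftp b) (snd x)) Q1 Psi))"
  proof -
    fix x assume x: "x \<in> set (alpha k m)"
    have cnt: "foldl cnt_after c0 (map (shiftp b) ((wb @ snd x) @ bw)) = c0"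
      using cwb cbw calpha[OF x] by simp
    show "Rtilde n wK p s (m - 1) ((wb @ snd x) @ bw)
      = RSK 0 A id (\<lambda>Q. RSK c0 (map (shiftp b) wb) Q (\<lambda>Q1. RSK c0 (map (shiftp b) (snd x)) Q1 Psi))"
    proof -
      have e: "\<And>Q H. RSK c0 (map (shiftp b) ((wb @ snd x) @ bw)) Q H = RSK c0 (map (shiftp b) wb) Q
          (\<lambda>Q1. RSK c0 (map (shiftp b) (snd x)) Q1 (\<lambda>Q2. RSK c0 (map (shiftp b) bw) Q2 H))"
        unfolding map_append RSK_append foldl_append cwb calpha[OF x] ..
      show ?thesis
        unfolding Rtilde_form[of n p wK s "(wb @ snd x) @ bw" "m - 1", unfolded c0' [unfolded A_def], OF cnt[unfolded b_def]]
        unfolding b_def[symmetric] A_def[symmetric] e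
        unfolding Psi_def Phi_def G_def by (rule refl)
    qed
  qed
  have "zz * sum_list (map (\<lambda>x. fst x * Rtilde n wK p s (m - 1) ((wb @ snd x) @ bw)) (alpha k m))
      = zz * sum_list (map (\<lambda>x. fst x * RSK 0 A id (\<lambda>Q. RSK c0 (map (shiftp b) wb) Q (\<lambda>Q1. RSK c0 (map (shiftp b) (snd x)) Q1 Psi))) (alpha k m))"
    by (intro arg_cong[where f="\<lambda>t. zz * sum_list t"] map_cong refl) (simp only: LHSterm)
  also have "\<dots> = RSK 0 A id (\<lambda>Q. RSK c0 (map (shiftp b) wb) Q (\<lambda>Q1. zz * LS c0 b (alpha k m) Q1 Psi))"
  proof -
    have "sum_list (map (\<lambda>x. fst x * RSK 0 A id (\<lambda>Q. RSK c0 (map (shiftp b) wb) Q (\<lambda>Q1. RSK c0 (map (shiftp b) (snd x)) Q1 Psi))) (alpha k m))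
      = RSK 0 A id (\<lambda>Q. sum_list (map (\<lambda>x. fst x * RSK c0 (map (shiftp b) wb) Q (\<lambda>Q1. RSK c0 (map (shiftp b) (snd x)) Q1 Psi)) (alpha k m)))"
      by (rule RSK_lin)
    also have "\<dots> = RSK 0 A id (\<lambda>Q. RSK c0 (map (shiftp b) wb) Q (\<lambda>Q1. sum_list (map (\<lambda>x. fst x * RSK c0 (map (shiftp b) (snd x)) Q1 Psi) (alpha k m))))"
      by (simp only: RSK_lin)
    also have "\<dots> = RSK 0 A id (\<lambda>Q. RSK c0 (map (shiftp b) wb) Q (\<lambda>Q1. LS c0 b (alpha k m) Q1 Psi))"
      unfolding LS_def by (simp only: split_def)
    finally show ?thesis by (simp only: RSK_mult[symmetric])
  qed
  also have "\<dots> = RSK 0 A id (\<lambda>Q. RSK c0 (map (shiftp b) wb) Q (\<lambda>Q1. (if Q1 (b + (m - k)) = b + (m - 1) then 1 else 0) * Psi Q1))"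
  proof (rule RSK_cong[OF pok0], rule RSK_cong)
    fix Q assume "pairing_ok (foldl cnt_after 0 A) Q"
    thus "pairing_ok c0 Q" using c0' by simp
  next
    fix Q1 assume "pairing_ok (foldl cnt_after c0 (map (shiftp b) wb)) Q1"
    hence p1: "pairing_ok c0 Q1" using cwb by simp
    have van: "\<forall>Q'. topp b m Q' \<longrightarrow> Psi Q' = 0"
    proof (intro allI impI)
      fix Q' assume t: "topp b m Q'"
      have "\<forall>x\<in>set (map (shiftp b) bw). \<exists>i. x = Cr i \<and> b \<le> i \<and> i + 3 \<le> b + m"
        using bwCr by fastforce
      moreover have "\<forall>Q'. topp b m Q' \<longrightarrow> Phi Q' = 0"
        unfolding Phi_def redp_def topp_def by auto
      ultimately show "Psi Q' = 0" unfolding Psi_def using BL t by blast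
    qed
    have "zz * LS c0 b (alpha_aux (k - 2) m) Q1 Psi = (if Q1 (b + m - (k - 2 + 2)) = b + m - 1 then Psi Q1 else 0)"
      by (rule LL) (use km c0 p1 van b_def in auto)
    moreover have "b + m - (k - 2 + 2) = b + (m - k)" "b + m - 1 = b + (m - 1)" using km by auto
    ultimately show "zz * LS c0 b (alpha k m) Q1 Psi = (if Q1 (b + (m - k)) = b + (m - 1) then 1 else 0) * Psi Q1"
      unfolding alpha_def by simp
  qed
  also have "\<dots> = Rtau n wK p s (m - k + 1) m (length wb) (wb @ bw)"
  proof -
    have mk: "m - k + 1 - 1 = m - k" using km by simp
    show ?thesis
      unfolding Rtau_form[of n p wK s wb bw "m - k + 1" m, unfolded c0(1), OF cwb[unfolded b_def] cbw[unfolded b_def]]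
      unfolding mk b_def[symmetric] A_def[symmetric]
      unfolding Psi_def Phi_def G_def by (rule refl)
  qed
  finally show ?thesis .
qed



lemma inner_scal: "sum_list (map (\<lambda>x. fst x * c * F x) xs) = c * sum_list (map (\<lambda>x. fst x * F x) (xs :: (rf \<times> 'a) list))"
  by (induction xs) (simp_all add: algebra_simps)

lemma swap_scal: "zz * sum_list (map (\<lambda>y. sum_list (map (\<lambda>x. fst x * fst y * F x y) xs)) ys)
   = sum_list (map (\<lambda>y. fst y * (zz * sum_list (map (\<lambda>x. fst x * F x y) xs))) (ys :: (rf \<times> 'b) list))"
  for xs :: "(rf \<times> 'a) list"
proof (induction ys)
  case Nil then show ?case by simp
next
  case (Cons y ys)
  have "sum_list (map (\<lambda>x. fst x * fst y * F x y) xs) = fst y * sum_list (map (\<lambda>x. fst x * F x y) xs)"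
    by (rule inner_scal)
  then show ?case using Cons by (simp add: distrib_left mult.left_commute)
qed

theorem lemma2p10:
  fixes wK :: "piece list" and ori :: "nat \<Rightarrow> nat \<Rightarrow> bool"
    and p s n k m :: nat and bw :: "piece list" and nu :: combo
  assumes "legendrian_knot_front wK" and "orientation_ok wK ori"
    and "p \<le> length wK" and "s < cntf 0 wK p" and "ori p s"
    and "1 < k" and "k \<le> m" and "m \<le> n"
    and "pos_perm_braid (m - 1) bw"
    and "\<forall>(c, w)\<in>set nu. in_R c \<and> valid_front n w n"
  shows "zz * Rtilde_lin n wK p s (m - 1) (tmul [(1, bw)] (tmul (alpha k m) nu))
       = sum_list (map (\<lambda>(c, w). c * Rtau n wK p s (m - k + 1) m (length w) (w @ bw)) nu)"
proof -
  define c0 where "c0 = foldl cnt_after 0 (ncopy n (take p wK))"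
  have c0b: "n * s + n \<le> c0" using c0_bound(2)[OF assms(1,3,4)] unfolding c0_def .
  have "zz * Rtilde_lin n wK p s (m - 1) (tmul [(1, bw)] (tmul (alpha k m) nu))
     = zz * sum_list (map (\<lambda>y. sum_list (map (\<lambda>x. fst x * fst y * Rtilde n wK p s (m - 1) ((snd y @ snd x) @ bw)) (alpha k m))) nu)"
    unfolding Rtilde_lin_eq by (rule arg_cong[where f="\<lambda>t. zz * t"], rule sum_swap)
  also have "\<dots> = sum_list (map (\<lambda>y. fst y * (zz * sum_list (map (\<lambda>x. fst x * Rtilde n wK p s (m - 1) ((snd y @ snd x) @ bw)) (alpha k m)))) nu)"
    by (rule swap_scal)
  also have "\<dots> = sum_list (map (\<lambda>y. fst y * Rtau n wK p s (m - k + 1) m (length (snd y)) (snd y @ bw)) nu)"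
  proof (rule arg_cong[where f = sum_list], rule map_cong[OF refl])
    fix y assume y: "y \<in> set nu"
    have v: "valid_front n (snd y) n" using assms(10) y by (auto simp: split_def)
    show "fst y * (zz * sum_list (map (\<lambda>x. fst x * Rtilde n wK p s (m - 1) ((snd y @ snd x) @ bw)) (alpha k m)))
        = fst y * Rtau n wK p s (m - k + 1) m (length (snd y)) (snd y @ bw)"
      using per_tangle[OF c0_def[symmetric] c0b assms(6,7,8,9) v] by simp
  qed
  also have "\<dots> = sum_list (map (\<lambda>(c, w). c * Rtau n wK p s (m - k + 1) m (length w) (w @ bw)) nu)"
    by (simp add: split_def)
  finally show ?thesis .
qed


end
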